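(* For every $\epsilon\in(0,1)$ there exist a constant $M>0$ and an infinite strictly increasing sequence of positive integers $n_1<n_2<\cdots$ such that for all $j$, $$R_3(n_j)\ge M\exp\!\left(\frac{\log(2-\epsilon)\,\log n_j}{\log\log n_j}\right).$$
   Context: For a positive integer $n$, $R_3(n)$ denotes the number of ordered triples $(x,y,z)$ of positive integers with $n = xyz + x + y + z$. *)

theory Defs
  imports Complex_Main
begin

definition R3 :: "nat \<Rightarrow> nat" where
  "R3 n = card {(x::nat, y::nat, z::nat).
              x \<ge> 1 \<and> y \<ge> 1 \<and> z \<ge> 1 \<and> n = x * y * z + x + y + z}"

end

theory Submission
  imports Defs "HOL-Number_Theory.Number_Theory" "HOL-Real_Asymp.Real_Asymp"
begin

lemma Suc_div_split: "0 < (d::nat) \<Longrightarrow> Suc n div d = n div d + (if d dvd Suc n then 1 else 0)"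
  by (simp add: div_Suc dvd_eq_mod_eq_0)

lemma ln_fact_mangoldt:
  "n \<le> K \<Longrightarrow> ln (fact n :: real) = (\<Sum>d=1..K. mangoldt d * real (n div d))"
proof (induction n)
  case 0
  then show ?case by simp
next
  case (Suc n)
  have IH: "ln (fact n :: real) = (\<Sum>d=1..K. mangoldt d * real (n div d))"
    using Suc by simp
  have "ln (real (Suc n)) = (\<Sum>d | d dvd Suc n. mangoldt d :: real)"
    using mangoldt_sum[of "Suc n", where 'a=real] by simp
  also have "{d. d dvd Suc n} = {d\<in>{1..K}. d dvd Suc n}"
    using Suc.prems by (auto dest: dvd_imp_le simp: Suc_le_eq intro: dvd_pos_nat[of "Suc n"])
  also have "(\<Sum>d\<in>\<dots>. mangoldt d :: real) = (\<Sum>d=1..K. if d dvd Suc n then mangoldt d else 0)"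
    by (rule sum.inter_filter) simp
  finally have L: "ln (real (Suc n)) = (\<Sum>d=1..K. if d dvd Suc n then mangoldt d else 0)" .
  have "ln (fact (Suc n) :: real) = ln (real (Suc n)) + ln (fact n)"
    by (simp add: ln_mult fact_gt_zero del: of_nat_Suc)
  also have "\<dots> = (\<Sum>d=1..K. mangoldt d * real (Suc n div d))"
    unfolding L IH sum.distrib[symmetric]
    by (intro sum.cong refl) (auto simp: Suc_div_split algebra_simps)
  finally show ?case .
qed

lemma div2_helper: "2 * (m::nat) div d \<le> 2 * (m div d) + 1"
proof (cases "d = 0")
  case False
  define q where "q = m div d"
  define r where "r = m mod d"
  have m: "m = q * d + r" unfolding q_def r_def by simp
  have r: "r < d" unfolding r_def using False by simp
  have "2 * m < (2 * q + 2) * d" unfolding m using r by (simp add: algebra_simps)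
  hence "2 * m div d < 2 * q + 2" by (rule less_mult_imp_div_less)
  thus ?thesis unfolding q_def by simp
qed simp

lemma ln_central_binom_le:
  "ln (real (2*m choose m)) \<le> (\<Sum>d=1..2*m. mangoldt d :: real)"
proof -
  have "fact (2*m) = (2*m choose m) * fact m * (fact m :: nat)"
    using binomial_fact_lemma[of m "2*m"] by (simp add: algebra_simps)
  hence eq: "(fact (2*m) :: real) = real (2*m choose m) * fact m * fact m"
    by (metis of_nat_fact of_nat_mult)
  have pos: "real (2*m choose m) > 0" by simp
  have mle: "m \<le> 2*m" by simp
  have "ln (real (2*m choose m)) = ln (fact (2*m)) - ln (fact m) - ln (fact m)"
    using pos by (simp add: eq ln_mult fact_gt_zero)
  also have "\<dots> = (\<Sum>d=1..2*m. mangoldt d * (real (2*m div d) - real (m div d) - real (m div d)))"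
    unfolding ln_fact_mangoldt[of "2*m" "2*m", OF order_refl] ln_fact_mangoldt[of m "2*m", OF mle]
    by (simp only: right_diff_distrib sum_subtractf)
  also have "\<dots> \<le> (\<Sum>d=1..2*m. mangoldt d)"
  proof (intro sum_mono)
    fix d assume "d \<in> {1..2*m}"
    have "2*m div d \<le> 2*(m div d) + 1"
      by (rule div2_helper)
    hence "real (2*m div d) - real (m div d) - real (m div d) \<le> 1" by linarith
    thus "mangoldt d * (real (2*m div d) - real (m div d) - real (m div d)) \<le> mangoldt d"
      using mangoldt_nonneg[of d] by (simp add: mult_left_le)
  qed
  finally show ?thesis .
qed

lemma central_binom_ge: "(2::real) ^ m \<le> real (2*m choose m)"
proof (cases "m = 0")
  case False
  have "(real (2*m) / real m) ^ m \<le> real (2*m choose m)"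
    by (rule binomial_ge_n_over_k_pow_k) simp
  thus ?thesis using False by simp
qed simp

lemma psi_le_card:
  "(\<Sum>d=1..N. mangoldt d :: real) \<le> real (card {d\<in>{1..N}. primepow d}) * ln (real N)"
proof -
  have "(\<Sum>d=1..N. mangoldt d :: real) = (\<Sum>d\<in>{d\<in>{1..N}. primepow d}. mangoldt d)"
    by (intro sum.mono_neutral_right) (auto simp: mangoldt_def)
  also have "\<dots> \<le> (\<Sum>d\<in>{d\<in>{1..N}. primepow d}. ln (real N))"
  proof (intro sum_mono)
    fix d assume d: "d \<in> {d\<in>{1..N}. primepow d}"
    hence "mangoldt d \<le> ln (real d)" by (intro mangoldt_le) auto
    also have "\<dots> \<le> ln (real N)" using d by auto
    finally show "mangoldt d \<le> ln (real N)" .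
  qed
  also have "\<dots> = real (card {d\<in>{1..N}. primepow d}) * ln (real N)" by simp
  finally show ?thesis .
qed

lemma card_exp_le: "N \<ge> 1 \<Longrightarrow> real (card {k::nat. 2^k \<le> N}) \<le> log 2 (real N) + 1"
proof -
  assume N: "N \<ge> 1"
  have sub: "{k::nat. 2^k \<le> N} \<subseteq> {0..nat \<lfloor>log 2 (real N)\<rfloor>}"
  proof
    fix k assume "k \<in> {k::nat. 2^k \<le> N}"
    hence "(2::real)^k \<le> real N" by (metis mem_Collect_eq numeral_power_le_of_nat_cancel_iff)
    hence "log 2 ((2::real)^k) \<le> log 2 (real N)" using N by (subst log_le_cancel_iff) auto
    hence "real k \<le> log 2 (real N)" by (simp add: log_nat_power)
    thus "k \<in> {0..nat \<lfloor>log 2 (real N)\<rfloor>}" by (simp add: le_nat_floor)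
  qed
  have "card {k::nat. 2^k \<le> N} \<le> card {0..nat \<lfloor>log 2 (real N)\<rfloor>}"
    by (intro card_mono sub) auto
  also have "\<dots> = nat \<lfloor>log 2 (real N)\<rfloor> + 1" by simp
  finally have "real (card {k::nat. 2^k \<le> N}) \<le> real (nat \<lfloor>log 2 (real N)\<rfloor>) + 1" by linarith
  also have "real (nat \<lfloor>log 2 (real N)\<rfloor>) \<le> log 2 (real N)"
    using N by (simp add: of_nat_nat)
  finally show ?thesis by simp
qed

lemma card_primepow_le:
  assumes N: "N \<ge> 1"
  shows "real (card {d\<in>{1..N}. primepow d}) \<le> real (card {p. prime p \<and> p \<le> N}) * (log 2 (real N) + 1)"
proof -
  let ?f = "\<lambda>d. (aprimedivisor d, multiplicity (aprimedivisor d) d)"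
  have inj: "inj_on ?f {d\<in>{1..N}. primepow d}"
  proof (rule inj_onI)
    fix x y assume x: "x \<in> {d\<in>{1..N}. primepow d}" and y: "y \<in> {d\<in>{1..N}. primepow d}"
      and e: "?f x = ?f y"
    have "x = aprimedivisor x ^ multiplicity (aprimedivisor x) x" using x primepow_decompose[of x] by simp
    also have "\<dots> = aprimedivisor y ^ multiplicity (aprimedivisor y) y" using e by (metis prod.inject)
    also have "\<dots> = y" using y primepow_decompose[of y] by simp
    finally show "x = y" .
  qed
  have img: "?f ` {d\<in>{1..N}. primepow d} \<subseteq> {p. prime p \<and> p \<le> N} \<times> {k. 2^k \<le> N}"
  proof
    fix z assume "z \<in> ?f ` {d\<in>{1..N}. primepow d}"
    then obtain d where d: "d \<in> {1..N}" "primepow d" and z: "z = ?f d" by auto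
    have p: "prime (aprimedivisor d)" using d by (intro prime_aprimedivisor') (auto simp: primepow_def prime_gt_0_nat)
    have dec: "aprimedivisor d ^ multiplicity (aprimedivisor d) d = d" using primepow_decompose[OF d(2)] .
    have pd: "aprimedivisor d \<le> d" using d by (intro dvd_imp_le aprimedivisor_dvd') auto
    have "2 ^ multiplicity (aprimedivisor d) d \<le> aprimedivisor d ^ multiplicity (aprimedivisor d) d"
      using p by (intro power_mono) (auto simp: prime_ge_2_nat)
    hence "2 ^ multiplicity (aprimedivisor d) d \<le> N" using dec d by simp
    thus "z \<in> {p. prime p \<and> p \<le> N} \<times> {k. 2^k \<le> N}" using z p pd d by auto
  qed
  have fin2: "finite {k::nat. 2^k \<le> N}"
  proof (rule finite_subset)
    show "{k::nat. 2^k \<le> N} \<subseteq> {..N}"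
      by auto (meson le_trans less_exp linorder_not_less order_less_imp_le)
  qed auto
  have "card {d\<in>{1..N}. primepow d} = card (?f ` {d\<in>{1..N}. primepow d})"
    using inj by (simp add: card_image)
  also have "\<dots> \<le> card ({p. prime p \<and> p \<le> N} \<times> {k. 2^k \<le> N})"
    by (intro card_mono img finite_cartesian_product fin2) auto
  also have "\<dots> = card {p. prime p \<and> p \<le> N} * card {k::nat. 2^k \<le> N}"
    by (simp add: card_cartesian_product)
  finally have "real (card {d\<in>{1..N}. primepow d}) \<le> real (card {p. prime p \<and> p \<le> N}) * real (card {k::nat. 2^k \<le> N})"
    by (metis of_nat_le_iff of_nat_mult)
  also have "\<dots> \<le> real (card {p. prime p \<and> p \<le> N}) * (log 2 (real N) + 1)"
    by (intro mult_left_mono card_exp_le N) auto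
  finally show ?thesis .
qed

lemma chebyshev_lower:
  assumes "m \<ge> 1"
  shows "real m * ln 2 \<le> real (card {p. prime p \<and> p \<le> 2*m}) * (log 2 (real (2*m)) + 1) * ln (real (2*m))"
proof -
  have "real m * ln 2 = ln ((2::real)^m)" by (simp add: ln_realpow)
  also have "\<dots> \<le> ln (real (2*m choose m))"
    using central_binom_ge[of m] by (subst ln_le_cancel_iff) auto
  also have "\<dots> \<le> (\<Sum>d=1..2*m. mangoldt d)" by (rule ln_central_binom_le)
  also have "\<dots> \<le> real (card {d\<in>{1..2*m}. primepow d}) * ln (real (2*m))" by (rule psi_le_card)
  also have "\<dots> \<le> real (card {p. prime p \<and> p \<le> 2*m}) * (log 2 (real (2*m)) + 1) * ln (real (2*m))"
    using assms by (intro mult_right_mono card_primepow_le) auto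
  finally show ?thesis .
qed

lemma R3_finite: "finite {(x::nat, y::nat, z::nat). x \<ge> 1 \<and> y \<ge> 1 \<and> z \<ge> 1 \<and> n = x * y * z + x + y + z}"
  by (rule finite_subset[of _ "{0..n} \<times> {0..n} \<times> {0..n}"]) auto

lemma prod_primes_ge2: "finite T \<Longrightarrow> T \<noteq> {} \<Longrightarrow> (\<forall>p\<in>T. prime p) \<Longrightarrow> 2 \<le> (\<Prod>T :: nat)"
proof -
  assume T: "finite T" "T \<noteq> {}" "\<forall>p\<in>T. prime p"
  then obtain p where p: "p \<in> T" by auto
  have pos: "(\<Prod>T :: nat) > 0" using T by (auto intro!: prod_pos prime_gt_0_nat)
  have "p dvd \<Prod>T" using p T by (intro dvd_prodI)
  hence "p \<le> \<Prod>T" using pos by (intro dvd_imp_le)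
  moreover have "p \<ge> 2" using p T by (auto intro: prime_ge_2_nat)
  ultimately show ?thesis by simp
qed

lemma prime_factors_prod_primes: "finite T \<Longrightarrow> (\<forall>p\<in>T. prime p) \<Longrightarrow> prime_factors (\<Prod>T :: nat) = T"
proof -
  assume T: "finite T" "\<forall>p\<in>T. prime p"
  have "prime_factors (\<Prod>T :: nat) = \<Union>((prime_factors \<circ> (\<lambda>x. x)) ` T)"
    using T by (intro prime_factors_prod) (auto dest: prime_gt_0_nat)
  also have "\<dots> = T" using T by (auto simp: prime_prime_factors)
  finally show ?thesis .
qed

lemma arith_helper: "(x::nat) \<ge> 1 \<Longrightarrow> y \<ge> 1 \<Longrightarrow> x * y = 1 * (x - 1) * (y - 1) + 1 + (x - 1) + (y - 1)"
proof -
  assume "x \<ge> 1" "y \<ge> 1"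
  then obtain u v where "x = Suc u" "y = Suc v" by (metis Suc_le_D One_nat_def)
  thus ?thesis by simp
qed

lemma R3_prim:
  fixes N :: nat
  defines "S \<equiv> {p. prime p \<and> p \<le> N}"
  assumes N: "N \<ge> 2"
  shows "real (card (Pow S - {{}, S})) \<le> real (R3 (\<Prod>S))"
proof -
  have finS: "finite S" unfolding S_def by auto
  have primeS: "\<forall>p\<in>S. prime p" unfolding S_def by auto
  let ?g = "\<lambda>T. (1::nat, \<Prod>T - 1, \<Prod>(S - T) - 1)"
  have inj: "inj_on ?g (Pow S - {{}, S})"
  proof (rule inj_onI)
    fix T U assume T: "T \<in> Pow S - {{}, S}" and U: "U \<in> Pow S - {{}, S}" and e: "?g T = ?g U"
    have fT: "finite T" "\<forall>p\<in>T. prime p" using T finS primeS by (auto intro: finite_subset)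
    have fU: "finite U" "\<forall>p\<in>U. prime p" using U finS primeS by (auto intro: finite_subset)
    have "\<Prod>T \<ge> (2::nat)" using fT T by (intro prod_primes_ge2) auto
    moreover have "\<Prod>U \<ge> (2::nat)" using fU U by (intro prod_primes_ge2) auto
    moreover have "\<Prod>T - 1 = (\<Prod>U - 1 :: nat)" using e by simp
    ultimately have "\<Prod>T = (\<Prod>U :: nat)" by linarith
    hence "prime_factors (\<Prod>T) = prime_factors (\<Prod>U)" by simp
    thus "T = U" using prime_factors_prod_primes fT fU by metis
  qed
  have img: "?g ` (Pow S - {{}, S}) \<subseteq> {(x::nat, y::nat, z::nat). x \<ge> 1 \<and> y \<ge> 1 \<and> z \<ge> 1 \<and> \<Prod>S = x * y * z + x + y + z}"
  proof
    fix w assume "w \<in> ?g ` (Pow S - {{}, S})"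
    then obtain T where T: "T \<in> Pow S - {{}, S}" and w: "w = ?g T" by auto
    have fT: "finite T" "\<forall>p\<in>T. prime p" using T finS primeS by (auto intro: finite_subset)
    have fD: "finite (S - T)" "\<forall>p\<in>S - T. prime p" "S - T \<noteq> {}" using T finS primeS by auto
    have a: "\<Prod>T \<ge> (2::nat)" using fT T by (intro prod_primes_ge2) auto
    have b: "\<Prod>(S - T) \<ge> (2::nat)" using fD by (intro prod_primes_ge2) auto
    have "\<Prod>S = (\<Prod>T) * (\<Prod>(S - T) :: nat)"
    proof -
      have "T \<subseteq> S" using T by auto
      hence "\<Prod>S = (\<Prod>(S - T)) * (\<Prod>T :: nat)" using finS by (rule prod.subset_diff)
      thus ?thesis by (simp only: mult.commute)
    qed
    also have "\<dots> = 1 * (\<Prod>T - 1) * (\<Prod>(S - T) - 1) + 1 + (\<Prod>T - 1) + (\<Prod>(S - T) - 1)"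
      using a b by (intro arith_helper) auto
    finally show "w \<in> {(x::nat, y::nat, z::nat). x \<ge> 1 \<and> y \<ge> 1 \<and> z \<ge> 1 \<and> \<Prod>S = x * y * z + x + y + z}"
      using w a b by auto
  qed
  have "card (Pow S - {{}, S}) = card (?g ` (Pow S - {{}, S}))" using inj by (simp add: card_image)
  also have "\<dots> \<le> R3 (\<Prod>S)" unfolding R3_def by (intro card_mono R3_finite img)
  finally show ?thesis by simp
qed

lemma card_pow_minus: "finite S \<Longrightarrow> S \<noteq> {} \<Longrightarrow> card (Pow S - {{}, S}) = 2 ^ card S - 2"
proof -
  assume "finite S" "S \<noteq> {}"
  hence "card (Pow S - {{}, S}) = card (Pow S) - card {{}, S}"
    by (intro card_Diff_subset) auto
  also have "card {{}, S} = 2" using \<open>S \<noteq> {}\<close> by simp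
  finally show ?thesis using \<open>finite S\<close> by (simp add: card_Pow)
qed

lemma key_bound:
  fixes a :: real and N :: nat
  defines "S \<equiv> {p. prime p \<and> p \<le> N}"
  assumes a: "0 < a" and N: "N \<ge> 2"
    and h1: "real N powr a \<le> real (card S) * ln 2" and h2: "2 \<le> real N powr a"
  shows "exp (a * ln 2 * ln (real (\<Prod>S)) / ln (ln (real (\<Prod>S)))) \<le> 2 ^ card S"
proof -
  define r where "r = card S"
  define A where "A = ln (real (\<Prod>S))"
  have finS: "finite S" unfolding S_def by auto
  have primeS: "\<forall>p\<in>S. prime p" unfolding S_def by auto
  have "(\<Prod>p\<in>S. (2::nat)) \<le> (\<Prod>p\<in>S. p)"
    using primeS by (intro prod_mono) (auto intro: prime_ge_2_nat)
  hence "(2::nat) ^ r \<le> \<Prod>S" unfolding r_def by simp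
  hence lo: "(2::real) ^ r \<le> real (\<Prod>S)"
    by (metis of_nat_le_iff of_nat_numeral of_nat_power)
  have "\<Prod>S \<le> N ^ r" unfolding r_def S_def
    by (intro prod_le_power) (use N in auto)
  hence hi: "real (\<Prod>S) \<le> real N ^ r" by (metis of_nat_le_iff of_nat_power)
  have rpos: "real r * ln 2 \<ge> 2" unfolding r_def using h1 h2 by linarith
  have p2: "(0::real) < 2 ^ r" by simp
  have pp: "real (\<Prod>S) > 0" using lo p2 by linarith
  have "ln ((2::real) ^ r) \<le> A" unfolding A_def using lo p2 pp
    by (subst ln_le_cancel_iff) (auto simp del: of_nat_prod)
  hence Alo: "real r * ln 2 \<le> A" by (simp add: ln_realpow)
  have "A \<le> ln (real N ^ r)" unfolding A_def
    using hi pp N by (subst ln_le_cancel_iff) (auto simp del: of_nat_prod)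
  hence Ahi: "A \<le> real r * ln (real N)" using N by (simp add: ln_realpow)
  have lnN: "ln (real N) > 0" using N by simp
  have "a * ln (real N) = ln (real N powr a)" using N by (simp add: ln_powr)
  also have "\<dots> \<le> ln (real r * ln 2)" using h1 h2 rpos N unfolding r_def by (subst ln_le_cancel_iff) auto
  also have "\<dots> \<le> ln A" using Alo rpos by (subst ln_le_cancel_iff) auto
  finally have lnA: "a * ln (real N) \<le> ln A" .
  have lnApos: "ln A > 0" using lnA a lnN by (smt (verit) mult_pos_pos)
  have "a * A \<le> a * (real r * ln (real N))" using Ahi a by simp
  also have "\<dots> = real r * (a * ln (real N))" by simp
  also have "\<dots> \<le> real r * ln A" using lnA by (intro mult_left_mono) auto
  finally have "a * A / ln A \<le> real r" using lnApos by (simp add: divide_le_eq)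
  hence "(a * A / ln A) * ln 2 \<le> real r * ln 2" by (intro mult_right_mono) auto
  hence "a * ln 2 * A / ln A \<le> real r * ln 2" by (simp add: algebra_simps)
  hence "exp (a * ln 2 * A / ln A) \<le> exp (real r * ln 2)" by simp
  also have "\<dots> = 2 ^ r" by (simp add: exp_of_nat_mult)
  finally show ?thesis unfolding A_def r_def .
qed

theorem mainTheorem9:
  fixes \<epsilon> :: real
  assumes "0 < \<epsilon>" and "\<epsilon> < 1"
  shows "\<exists>M :: real. M > 0 \<and> (\<exists>n :: nat \<Rightarrow> nat. strict_mono n \<and> (\<forall>j. n j > 0) \<and>
           (\<forall>j. real (R3 (n j)) \<ge>
                 M * exp (ln (2 - \<epsilon>) * ln (real (n j)) / ln (ln (real (n j))))))"
proof -
  define a where "a = ln (2 - \<epsilon>) / ln 2"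
  have a0: "0 < a" using assms by (simp add: a_def)
  have a1: "a < 1" using assms by (simp add: a_def)
  have aeq: "ln (2 - \<epsilon>) = a * ln 2" by (simp add: a_def)
  have ev: "eventually (\<lambda>x::real. (2*x) powr a * (log 2 (2*x) + 1) * ln (2*x) \<le> x * ln 2 * ln 2
              \<and> 2 \<le> (2*x) powr a \<and> x \<ge> 1) at_top"
  proof (intro eventually_conj)
    show "eventually (\<lambda>x::real. (2*x) powr a * (log 2 (2*x) + 1) * ln (2*x) \<le> x * ln 2 * ln 2) at_top"
      using a0 a1 by real_asymp
    show "eventually (\<lambda>x::real. 2 \<le> (2*x) powr a) at_top" using a0 by real_asymp
    show "eventually (\<lambda>x::real. x \<ge> 1) at_top" by real_asymp
  qed
  have "eventually (\<lambda>m. (2*real m) powr a * (log 2 (2*real m) + 1) * ln (2*real m) \<le> real m * ln 2 * ln 2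
              \<and> 2 \<le> (2*real m) powr a \<and> real m \<ge> 1) sequentially"
    by (rule eventually_compose_filterlim[OF ev filterlim_real_sequentially])
  then obtain m0 where m0: "\<And>m. m \<ge> m0 \<Longrightarrow> (2*real m) powr a * (log 2 (2*real m) + 1) * ln (2*real m) \<le> real m * ln 2 * ln 2
              \<and> 2 \<le> (2*real m) powr a \<and> real m \<ge> 1"
    unfolding eventually_sequentially by blast
  define G where "G = {n::nat. n > 0 \<and> (1/2) * exp (ln (2 - \<epsilon>) * ln (real n) / ln (ln (real n))) \<le> real (R3 n)}"
  have good: "(\<Prod>{p. prime p \<and> p \<le> 2*m}) \<in> G" if m: "m \<ge> m0" for m
  proof -
    define N where "N = 2*m"
    define S where "S = {p. prime p \<and> p \<le> N}"
    have finS: "finite S" unfolding S_def by auto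
    have primeS: "\<forall>p\<in>S. prime p" unfolding S_def by auto
    from m0[OF m] have A: "(real N) powr a * (log 2 (real N) + 1) * ln (real N) \<le> real m * ln 2 * ln 2"
      and B: "2 \<le> real N powr a" and C: "real m \<ge> 1" by (auto simp: N_def)
    have N2: "N \<ge> 2" using C N_def by simp
    have "2 \<in> S" using N2 by (simp add: S_def)
    hence Sne: "S \<noteq> {}" by auto
    have cheb: "real m * ln 2 \<le> real (card S) * (log 2 (real N) + 1) * ln (real N)"
      unfolding S_def N_def using C by (intro chebyshev_lower) simp
    have "log 2 (real N) \<ge> 0" using N2 by simp
    hence l1: "log 2 (real N) + 1 > 0" by linarith
    have l2: "ln (real N) > 0" using N2 by simp
    have pos: "(log 2 (real N) + 1) * ln (real N) > 0" using mult_pos_pos[OF l1 l2] .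
    have "real N powr a * ((log 2 (real N) + 1) * ln (real N)) \<le> (real (card S) * ln 2) * ((log 2 (real N) + 1) * ln (real N))"
    proof -
      have "real m * ln 2 * ln 2 \<le> (real (card S) * (log 2 (real N) + 1) * ln (real N)) * ln 2"
        using cheb by (intro mult_right_mono) auto
      moreover have "(real (card S) * (log 2 (real N) + 1) * ln (real N)) * ln 2 =
          (real (card S) * ln 2) * ((log 2 (real N) + 1) * ln (real N))" by (simp only: mult_ac)
      moreover have "real N powr a * ((log 2 (real N) + 1) * ln (real N)) =
          real N powr a * (log 2 (real N) + 1) * ln (real N)" by (simp only: mult_ac)
      ultimately show ?thesis using A by linarith
    qed
    hence h1: "real N powr a \<le> real (card S) * ln 2" using pos by (rule mult_right_le_imp_le)
    have kb: "exp (a * ln 2 * ln (real (\<Prod>S)) / ln (ln (real (\<Prod>S)))) \<le> 2 ^ card S"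
      unfolding S_def by (rule key_bound[OF a0 N2 h1[unfolded S_def] B])
    have r2: "card S \<ge> 2"
    proof -
      have "real (card S) * ln 2 \<ge> 2" using h1 B by linarith
      hence "real (card S) \<ge> 2 / ln 2" by (simp add: divide_le_eq)
      moreover have "2 / ln 2 > (1::real)" using ln_2_less_1 by simp
      ultimately show ?thesis by linarith
    qed
    have "(2::real) ^ 2 \<le> 2 ^ card S" by (intro power_increasing r2) simp
    hence "(2::real) ^ card S \<ge> 4" by simp
    have R0: "real (card (Pow S - {{}, S})) \<le> real (R3 (\<Prod>S))"
      unfolding S_def by (rule R3_prim[OF N2])
    have R: "real (2 ^ card S - 2 :: nat) \<le> real (R3 (\<Prod>S))"
      using R0 unfolding card_pow_minus[OF finS Sne] .
    have "(2::nat) ^ 1 \<le> 2 ^ card S" using r2 by (intro power_increasing) auto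
    hence "(2::nat) ^ card S \<ge> 2" by simp
    hence "real (2 ^ card S - 2 :: nat) = 2 ^ card S - 2" by (simp add: of_nat_diff)
    hence R': "(2::real) ^ card S - 2 \<le> real (R3 (\<Prod>S))" using R by simp
    have "(1/2) * exp (ln (2 - \<epsilon>) * ln (real (\<Prod>S)) / ln (ln (real (\<Prod>S)))) \<le> (1/2) * 2 ^ card S"
      using kb unfolding aeq by (intro mult_left_mono) auto
    also have "\<dots> \<le> 2 ^ card S - 2" using \<open>(2::real) ^ card S \<ge> 4\<close> by simp
    finally have "(1/2) * exp (ln (2 - \<epsilon>) * ln (real (\<Prod>S)) / ln (ln (real (\<Prod>S)))) \<le> real (R3 (\<Prod>S))"
      using R' by linarith
    moreover have "\<Prod>S > 0" using finS primeS by (auto intro!: prod_pos prime_gt_0_nat)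
    ultimately show ?thesis unfolding G_def S_def N_def by simp
  qed
  have infG: "infinite G"
    unfolding infinite_nat_iff_unbounded
  proof
    fix B :: nat
    obtain p where p: "prime p" "B < p" using bigger_prime[of B] by auto
    define m where "m = max m0 p"
    have mem: "(\<Prod>{p. prime p \<and> p \<le> 2*m}) \<in> G" by (rule good) (simp add: m_def)
    have fin: "finite {p. prime p \<and> p \<le> 2*m}" by auto
    have "p \<in> {p. prime p \<and> p \<le> 2*m}" using p by (simp add: m_def)
    hence "p dvd \<Prod>{p. prime p \<and> p \<le> 2*m}" using fin by (intro dvd_prodI)
    moreover have "\<Prod>{p. prime p \<and> p \<le> 2*m} > 0" using mem by (simp add: G_def)
    ultimately have "p \<le> \<Prod>{p. prime p \<and> p \<le> 2*m}" by (intro dvd_imp_le)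
    thus "\<exists>n>B. n \<in> G" using mem p by (intro exI[of _ "\<Prod>{p. prime p \<and> p \<le> 2*m}"]) auto
  qed
  define n where "n = enumerate G"
  have "strict_mono n" unfolding n_def using infG by (rule strict_mono_enumerate)
  moreover have "\<And>j. n j \<in> G" unfolding n_def using infG by (rule enumerate_in_set)
  ultimately show ?thesis unfolding G_def
    by (intro exI[of _ "1/2"] conjI exI[of _ n]) auto
qed

end
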